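(* Let $w\in F_2$ be a word in $x,y$ and $G=\mathrm{SL}(2,\mathbb{C})$. If the trace map $\psi_w$ of $w$ is Big, then the word map $w:G^2\to G$ is almost surjective, i.e. its image contains $G\setminus\{-\mathrm{id}\}$.
   Context: For a word $w(x,y)$ there are polynomials $P_w(s,t,u)$, $Q_w(s,t,u)$ with integer coefficients such that for all $x,y\in G$: $\mathrm{tr}(w(x,y))=P_w(\mathrm{tr}\,x,\mathrm{tr}\,y,\mathrm{tr}\,xy)$ and $\mathrm{tr}(w(x,y)y)=Q_w(\mathrm{tr}\,x,\mathrm{tr}\,y,\mathrm{tr}\,xy)$. The trace map is $\psi_w:\mathbb{C}^3\to\mathbb{C}^3$, $\psi_w(s,t,u)=(P_w(s,t,u),t,Q_w(s,t,u))$. For $a\in\mathbb{C}$ let $\psi_a:\mathbb{C}^2_{s,u}\to\mathbb{C}^2$, $\psi_a(s,u)=(P_w(s,a,u),Q_w(s,a,u))$; $\psi_a$ is Big if $\psi_a(\mathbb{C}^2)=\mathbb{C}^2\setminus T_a$ for a finite set $T_a$, and $\psi_w$ is Big if $\psi_a$ is Big for some $a\in\mathbb{C}$. *)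

theory Defs
  imports "HOL-Analysis.Analysis"
begin

text \<open>Words in the free group F_2 on x, y: lists of letters (generator, inverted?).\<close>
datatype gen = GX | GY

type_synonym word = "(gen \<times> bool) list"

definition SL2 :: "(complex^2^2) set" where
  "SL2 = {A. det A = 1}"

fun letter_eval :: "complex^2^2 \<Rightarrow> complex^2^2 \<Rightarrow> gen \<times> bool \<Rightarrow> complex^2^2" where
  "letter_eval x y (g, b) =
     (let m = (if g = GX then x else y) in if b then matrix_inv m else m)"

definition word_eval :: "word \<Rightarrow> complex^2^2 \<Rightarrow> complex^2^2 \<Rightarrow> complex^2^2" where
  "word_eval w x y = foldr (\<lambda>l acc. letter_eval x y l ** acc) w (mat 1)"

definition psi_a_Big ::
  "(complex \<Rightarrow> complex \<Rightarrow> complex \<Rightarrow> complex) \<Rightarrow> (complex \<Rightarrow> complex \<Rightarrow> complex \<Rightarrow> complex) \<Rightarrow> complex \<Rightarrow> bool" where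
  "psi_a_Big P Q a \<longleftrightarrow>
     (\<exists>T. finite T \<and> (\<lambda>(s, u). (P s a u, Q s a u)) ` UNIV = UNIV - T)"

definition trace_map_Big ::
  "(complex \<Rightarrow> complex \<Rightarrow> complex \<Rightarrow> complex) \<Rightarrow> (complex \<Rightarrow> complex \<Rightarrow> complex \<Rightarrow> complex) \<Rightarrow> bool" where
  "trace_map_Big P Q \<longleftrightarrow> (\<exists>a. psi_a_Big P Q a)"

end

theory Submission imports Defs begin
definition M2 :: "complex \<Rightarrow> complex \<Rightarrow> complex \<Rightarrow> complex \<Rightarrow> complex^2^2" where
 "M2 a b c d = (\<chi> i j. if i = 1 then (if j = 1 then a else b) else (if j = 1 then c else d))"
lemma M2_nth[simp]: "M2 a b c d $1$1 = a" "M2 a b c d $1$2 = b" "M2 a b c d $2$1 = c" "M2 a b c d $2$2 = d"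
  by (simp_all add: M2_def)
lemma mat2_eq: "(A::complex^2^2) = B \<longleftrightarrow> A$1$1=B$1$1 \<and> A$1$2=B$1$2 \<and> A$2$1=B$2$1 \<and> A$2$2=B$2$2"
  by (auto simp: vec_eq_iff forall_2)
lemma mult2[simp]: "((A::complex^2^2) ** B)$i$j = A$i$1*B$1$j + A$i$2*B$2$j"
  by (simp add: matrix_matrix_mult_def sum_2)
lemma trace2: "trace (A::complex^2^2) = A$1$1 + A$2$2"
  by (simp add: trace_def sum_2)
lemma mat1_2[simp]: "(mat 1::complex^2^2)$1$1 = 1" "(mat 1::complex^2^2)$1$2 = 0" "(mat 1::complex^2^2)$2$1 = 0" "(mat 1::complex^2^2)$2$2 = 1"
  by (simp_all add: mat_def)

lemma inv_props:
  fixes A :: "complex^2^2"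
  assumes "det A \<noteq> 0"
  shows "A ** matrix_inv A = mat 1 \<and> matrix_inv A ** A = mat 1"
proof -
  have "invertible A" using assms invertible_det_nz by blast
  then show ?thesis unfolding invertible_def matrix_inv_def by (rule someI_ex)
qed

lemma inv_unique:
  fixes A B :: "complex^2^2"
  assumes "A ** B = mat 1" "B ** A = mat 1"
  shows "matrix_inv A = B"
proof -
  have "\<exists>A'. A ** A' = mat 1 \<and> A' ** A = mat 1" using assms by blast
  then have C: "A ** matrix_inv A = mat 1 \<and> matrix_inv A ** A = mat 1"
    unfolding matrix_inv_def by (rule someI_ex)
  have "matrix_inv A = matrix_inv A ** (A ** B)" using assms by simp
  also have "\<dots> = (matrix_inv A ** A) ** B" by (simp add: matrix_mul_assoc)
  also have "\<dots> = B" using C by simp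
  finally show ?thesis .
qed

lemma conj_inv:
  fixes h h' x :: "complex^2^2"
  assumes hh: "h ** h' = mat 1" "h' ** h = mat 1" and dx: "det x \<noteq> 0"
  shows "matrix_inv (h ** x ** h') = h ** matrix_inv x ** h'"
proof (rule inv_unique)
  note X = inv_props[OF dx]
  have "h ** x ** h' ** (h ** matrix_inv x ** h') = h ** x ** (h' ** h) ** matrix_inv x ** h'"
    by (simp add: matrix_mul_assoc)
  also have "\<dots> = h ** (x ** matrix_inv x) ** h'" using hh by (simp add: matrix_mul_assoc)
  also have "\<dots> = mat 1" using X hh by simp
  finally show "h ** x ** h' ** (h ** matrix_inv x ** h') = mat 1" .
  have "h ** matrix_inv x ** h' ** (h ** x ** h') = h ** matrix_inv x ** (h' ** h) ** x ** h'"
    by (simp add: matrix_mul_assoc)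
  also have "\<dots> = h ** (matrix_inv x ** x) ** h'" using hh by (simp add: matrix_mul_assoc)
  also have "\<dots> = mat 1" using X hh by simp
  finally show "h ** matrix_inv x ** h' ** (h ** x ** h') = mat 1" .
qed

lemma word_conj:
  fixes h h' x y :: "complex^2^2"
  assumes hh: "h ** h' = mat 1" "h' ** h = mat 1" and dx: "det x \<noteq> 0" and dy: "det y \<noteq> 0"
  shows "word_eval w (h ** x ** h') (h ** y ** h') = h ** word_eval w x y ** h'"
proof (induction w)
  case Nil
  then show ?case using hh by (simp add: word_eval_def)
next
  case (Cons l w)
  obtain g b where l: "l = (g, b)" by force
  have L: "letter_eval (h ** x ** h') (h ** y ** h') l = h ** letter_eval x y l ** h'"
    using conj_inv[OF hh dx] conj_inv[OF hh dy] by (auto simp: l Let_def)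
  have "word_eval (l # w) (h ** x ** h') (h ** y ** h')
     = (h ** letter_eval x y l ** h') ** (h ** word_eval w x y ** h')"
    using Cons L by (simp add: word_eval_def)
  also have "\<dots> = h ** letter_eval x y l ** (h' ** h) ** word_eval w x y ** h'"
    by (simp add: matrix_mul_assoc)
  also have "\<dots> = h ** word_eval (l # w) x y ** h'"
    using hh by (simp add: word_eval_def matrix_mul_assoc)
  finally show ?case .
qed

lemma det_inv1:
  fixes x :: "complex^2^2"
  assumes "det x = 1" shows "det (matrix_inv x) = 1"
proof -
  have "det x * det (matrix_inv x) = 1"
    using inv_props[of x] assms det_mul[of x "matrix_inv x"] det_I by (metis one_neq_zero)
  then show ?thesis using assms by simp
qed

lemma det_word:
  fixes x y :: "complex^2^2"
  assumes "det x = 1" "det y = 1"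
  shows "det (word_eval w x y) = 1"
proof (induction w)
  case Nil then show ?case by (simp add: word_eval_def det_I)
next
  case (Cons l w)
  obtain g b where l: "l = (g, b)" by force
  have "det (letter_eval x y l) = 1" using assms det_inv1 by (auto simp: l Let_def)
  then show ?case using Cons by (simp add: word_eval_def det_mul)
qed

lemma word_id: "word_eval w (mat 1) (mat 1) = (mat 1 :: complex^2^2)"
proof (induction w)
  case Nil then show ?case by (simp add: word_eval_def)
next
  case (Cons l w)
  have i: "matrix_inv (mat 1 :: complex^2^2) = mat 1" by (rule inv_unique) simp_all
  obtain g b where l: "l = (g, b)" by force
  show ?case using Cons i by (auto simp: word_eval_def l Let_def)
qed

lemma realize:
  "\<exists>x y :: complex^2^2. det x = 1 \<and> det y = 1 \<and> trace x = s \<and> trace y = a \<and> trace (x ** y) = u"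
proof -
  define c where "c = (u + csqrt (u^2 - 4)) / 2"
  have cq: "c^2 - u * c + 1 = 0"
    unfolding c_def by (simp add: power2_eq_square field_simps power2_csqrt[unfolded power2_eq_square])
  then have c0: "c \<noteq> 0" by auto
  define x where "x = M2 s 1 (-1) 0"
  define y where "y = M2 0 (-1/c) c a"
  have "det x = 1" by (simp add: x_def det_2)
  moreover have "det y = 1" using c0 by (simp add: y_def det_2)
  moreover have "trace x = s" by (simp add: x_def trace2)
  moreover have "trace y = a" by (simp add: y_def trace2)
  moreover have "trace (x ** y) = u"
    using c0 cq by (simp add: x_def y_def trace2 field_simps power2_eq_square)
  ultimately show ?thesis by blast
qed

definition ns :: "complex^2^2 \<Rightarrow> bool" where
  "ns A \<longleftrightarrow> \<not> (A$1$2 = 0 \<and> A$2$1 = 0 \<and> A$1$1 = A$2$2)"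

lemma companion:
  fixes A :: "complex^2^2"
  assumes d: "det A = 1" and n: "ns A"
  shows "\<exists>g. det g \<noteq> 0 \<and> A ** g = g ** M2 0 (-1) 1 (trace A)"
proof -
  have d': "A$1$1 * A$2$2 - A$1$2 * A$2$1 = 1" using d by (simp add: det_2)
  show ?thesis
  proof (cases "A$2$1 \<noteq> 0")
    case True
    show ?thesis
      apply (rule exI[of _ "M2 1 (A$1$1) 0 (A$2$1)"])
      using True d' by (simp add: det_2 mat2_eq trace2 algebra_simps)
  next
    case False
    show ?thesis
    proof (cases "A$1$2 \<noteq> 0")
      case True
      show ?thesis
        apply (rule exI[of _ "M2 0 (A$1$2) 1 (A$2$2)"])
        using True d' by (simp add: det_2 mat2_eq trace2 algebra_simps)
    next
      case F2: False
      then have "A$1$1 \<noteq> A$2$2" using False n by (simp add: ns_def)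
      then show ?thesis
        apply (intro exI[of _ "M2 1 (A$1$1) 1 (A$2$2)"])
        using False F2 d' by (simp add: det_2 mat2_eq trace2 algebra_simps power2_eq_square)
    qed
  qed
qed

lemma conjugate:
  fixes A B :: "complex^2^2"
  assumes "det A = 1" "ns A" "det B = 1" "ns B" "trace A = trace B"
  shows "\<exists>h h'. h ** h' = mat 1 \<and> h' ** h = mat 1 \<and> B = h ** A ** h'"
proof -
  define C where "C = M2 0 (-1) 1 (trace A)"
  obtain g1 where g1: "det g1 \<noteq> 0" "A ** g1 = g1 ** C"
    using companion[OF assms(1,2)] C_def by blast
  obtain g2 where g2: "det g2 \<noteq> 0" "B ** g2 = g2 ** C"
    using companion[OF assms(3,4)] C_def assms(5) by metis
  note I1 = inv_props[OF g1(1)] and I2 = inv_props[OF g2(1)]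
  define h where "h = g2 ** matrix_inv g1"
  define h' where "h' = g1 ** matrix_inv g2"
  have "h ** h' = g2 ** (matrix_inv g1 ** g1) ** matrix_inv g2"
    by (simp add: h_def h'_def matrix_mul_assoc)
  then have hh1: "h ** h' = mat 1" using I1 I2 by simp
  have "h' ** h = g1 ** (matrix_inv g2 ** g2) ** matrix_inv g1"
    by (simp add: h_def h'_def matrix_mul_assoc)
  then have hh2: "h' ** h = mat 1" using I1 I2 by simp
  have "h ** A ** h' = g2 ** matrix_inv g1 ** (A ** g1) ** matrix_inv g2"
    by (simp add: h_def h'_def matrix_mul_assoc)
  also have "\<dots> = g2 ** (matrix_inv g1 ** g1) ** C ** matrix_inv g2"
    using g1 by (simp add: matrix_mul_assoc)
  also have "\<dots> = (g2 ** C) ** matrix_inv g2" using I1 by simp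
  also have "\<dots> = B ** (g2 ** matrix_inv g2)" using g2 by (simp add: matrix_mul_assoc)
  also have "\<dots> = B" using I2 by simp
  finally show ?thesis using hh1 hh2 by metis
qed

lemma det_conj:
  fixes h h' x :: "complex^2^2"
  assumes "h ** h' = mat 1" shows "det (h ** x ** h') = det x"
proof -
  have "det h * det h' = 1" using assms det_mul[of h h'] det_I by metis
  then show ?thesis by (simp add: det_mul algebra_simps)
qed

theorem proposition8p2:
  fixes w :: word
    and P Q :: "complex \<Rightarrow> complex \<Rightarrow> complex \<Rightarrow> complex"
  assumes P_w: "\<forall>x\<in>SL2. \<forall>y\<in>SL2. trace (word_eval w x y) = P (trace x) (trace y) (trace (x ** y))"
    and Q_w: "\<forall>x\<in>SL2. \<forall>y\<in>SL2. trace (word_eval w x y ** y) = Q (trace x) (trace y) (trace (x ** y))"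
    and Big: "trace_map_Big P Q"
  shows "SL2 - {- mat 1} \<subseteq> (\<lambda>(x, y). word_eval w x y) ` (SL2 \<times> SL2)"
proof
  fix z assume zin: "z \<in> SL2 - {- mat 1}"
  then have dz: "det z = 1" and zn: "z \<noteq> - mat 1" by (auto simp: SL2_def)
  show "z \<in> (\<lambda>(x, y). word_eval w x y) ` (SL2 \<times> SL2)"
  proof (cases "ns z")
    case False
    then have e: "z$1$2 = 0" "z$2$1 = 0" "z$1$1 = z$2$2" by (auto simp: ns_def)
    then have "z$1$1 * z$1$1 = 1" using dz by (simp add: det_2)
    then have "z$1$1 = 1 \<or> z$1$1 = -1"
      by (metis power2_eq_square power2_eq_1_iff)
    moreover have "z$1$1 \<noteq> -1" using zn e by (auto simp: mat2_eq)
    ultimately have "z = mat 1" using e by (auto simp: mat2_eq)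
    moreover have "mat 1 \<in> SL2" by (simp add: SL2_def det_I)
    ultimately show ?thesis using word_id[of w] by force
  next
    case True
    obtain a T where fT: "finite T" and img: "(\<lambda>(s, u). (P s a u, Q s a u)) ` UNIV = UNIV - T"
      using Big unfolding trace_map_Big_def psi_a_Big_def by blast
    define t where "t = trace z"
    have "finite (snd ` T \<union> {a, -a})" using fT by simp
    then obtain q where q: "q \<notin> snd ` T \<union> {a, -a}"
      using ex_new_if_finite[OF infinite_UNIV_char_0] by blast
    then have "(t, q) \<notin> T" by force
    then have "(t, q) \<in> (\<lambda>(s, u). (P s a u, Q s a u)) ` UNIV" using img by simp
    then obtain s u where su: "P s a u = t" "Q s a u = q" by auto
    obtain x y :: "complex^2^2" where xy: "det x = 1" "det y = 1" "trace x = s" "trace y = a"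
      "trace (x ** y) = u" using realize by blast
    have xS: "x \<in> SL2" and yS: "y \<in> SL2" using xy by (auto simp: SL2_def)
    define W where "W = word_eval w x y"
    have trW: "trace W = t" using P_w xS yS xy su by (simp add: W_def)
    have trWy: "trace (W ** y) = q" using Q_w xS yS xy su by (simp add: W_def)
    have dW: "det W = 1" using det_word xy by (simp add: W_def)
    have nW: "ns W"
    proof (rule ccontr)
      assume "\<not> ns W"
      then have e: "W$1$2 = 0" "W$2$1 = 0" "W$1$1 = W$2$2" by (auto simp: ns_def)
      then have "W$1$1 * W$1$1 = 1" using dW by (simp add: det_2)
      then have "W$1$1 = 1 \<or> W$1$1 = -1"
        by (metis power2_eq_square power2_eq_1_iff)
      moreover have "trace (W ** y) = W$1$1 * a" 
      proof -
        have "trace (W ** y) = W$1$1 * (y$1$1 + y$2$2)" using e by (simp add: trace2 algebra_simps)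
        then show ?thesis using xy(4) by (simp add: trace2)
      qed
      ultimately have "q = a \<or> q = -a" using trWy by auto
      then show False using q by auto
    qed
    obtain h h' where hh: "h ** h' = mat 1" "h' ** h = mat 1" "z = h ** W ** h'"
      using conjugate[OF dW nW dz True] trW t_def by metis
    have "word_eval w (h ** x ** h') (h ** y ** h') = z"
      using word_conj[OF hh(1,2)] xy hh(3) by (simp add: W_def)
    moreover have "(h ** x ** h', h ** y ** h') \<in> SL2 \<times> SL2"
      using det_conj[OF hh(1)] xy by (simp add: SL2_def)
    ultimately show ?thesis by force
  qed
qed
end
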